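(* In a positive, anchored hidden Markov model, under any (measurable) policy $g$, the restricted information chain $F|_R$ has at least one state of the form $\delta(x_i)$ (with $(x_i,y_i)$ an anchor pair for some observation process $i$) which is positive recurrent, i.e. whose expected return time is finite.
   Context: Model: $(X_t)$ is a time-homogeneous Markov chain on $S=\{1,\dots,n\}$ with transition matrix $T$; $O$ is a finite index set of observation processes with values in $V=\{1,\dots,m\}$ and observation matrices $M^{(i)}$, $M^{(i)}_{jk}=\mathbb P(Y^{(i)}_t=k\mid X_t=j)$. $\mathcal P(S)$ is the probability simplex in $\mathbb R^n$, $\delta(x)$ the point mass at $x$. A policy is a function $g:\mathcal P(S)\to O$, $A_i=g^{-1}\{i\}$. For $i\in O$, $y\in V$: $\alpha_{i,y}(z)=(zTM^{(i)})_y=\sum_{j,x}z_jT_{j,x}M^{(i)}_{x,y}$ and, when $\alpha_{i,y}(z)>0$, $r_{i,y}(z)=\frac{\sum_{x,j}M^{(i)}_{x,y}T_{j,x}z_j\delta(x)}{\sum_{x,j}M^{(i)}_{x,y}T_{j,x}z_j}$. Positive: all entries of $T$ strictly positive. Anchored: $(X_t)$ ergodic and for each $i\in O$ there is an anchor pair $(x_i,y_i)$ with $M^{(i)}_{x_i,y_i}>0$ and $M^{(i)}_{x,y_i}=0$ for $x\ne x_i$. Orbit $R_x$: $\delta(x)$ together with all points $r_{i_k,y_k}\circ\cdots\circ r_{i_1,y_1}(\delta(x))$ ($k\ge1$, arbitrary $i_j\in O,y_j\in V$) with each $\alpha_{i_{j+1},y_{j+1}}$ positive at the preceding point; $R=\bigcup_xR_x$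 (countable). The restricted information chain $F|_R$ is the Markov chain on $R$ that from $z$ moves to $r_{g(z),y}(z)$ with probability $\alpha_{g(z),y}(z)$, $y\in V$ (this is the information state chain, i.e. the posterior of the hidden state, restricted to $R$). *)

theory Defs
  imports "HOL-Analysis.Analysis"
begin

text \<open>States: finite type 's (the set S); observation values:
finite type 'v (the set V); observation processes: finite type 'o (the index set O).
Transition matrix T :: 's => 's => real, observation matrices M i x y = P(Y^(i)_t = y | X_t = x).\<close>

definition stochastic_matrix :: "('a::finite \<Rightarrow> 'b::finite \<Rightarrow> real) \<Rightarrow> bool" where
  "stochastic_matrix A \<longleftrightarrow> (\<forall>i j. A i j \<ge> 0) \<and> (\<forall>i. (\<Sum>j\<in>UNIV. A i j) = 1)"

definition prob_simplex :: "('s::finite \<Rightarrow> real) set" where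
  "prob_simplex = {z. (\<forall>s. z s \<ge> 0) \<and> (\<Sum>s\<in>UNIV. z s) = 1}"

definition delta :: "'s \<Rightarrow> 's \<Rightarrow> real" where
  "delta x = (\<lambda>s. if s = x then 1 else 0)"

fun mpow :: "('s::finite \<Rightarrow> 's \<Rightarrow> real) \<Rightarrow> nat \<Rightarrow> 's \<Rightarrow> 's \<Rightarrow> real" where
  "mpow A 0 = (\<lambda>i j. if i = j then 1 else 0)"
| "mpow A (Suc k) = (\<lambda>i j. \<Sum>l\<in>UNIV. mpow A k i l * A l j)"

definition irreducible_chain :: "('s::finite \<Rightarrow> 's \<Rightarrow> real) \<Rightarrow> bool" where
  "irreducible_chain A \<longleftrightarrow> (\<forall>i j. \<exists>k. mpow A k i j > 0)"

definition aperiodic_chain :: "('s::finite \<Rightarrow> 's \<Rightarrow> real) \<Rightarrow> bool" where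
  "aperiodic_chain A \<longleftrightarrow> (\<forall>i. Gcd {k. k > 0 \<and> mpow A k i i > 0} = 1)"

definition ergodic_chain :: "('s::finite \<Rightarrow> 's \<Rightarrow> real) \<Rightarrow> bool" where
  "ergodic_chain A \<longleftrightarrow> irreducible_chain A \<and> aperiodic_chain A"

definition positive_chain :: "('s::finite \<Rightarrow> 's \<Rightarrow> real) \<Rightarrow> bool" where
  "positive_chain A \<longleftrightarrow> (\<forall>i j. A i j > 0)"

definition anchor_pair :: "('o \<Rightarrow> 's \<Rightarrow> 'v \<Rightarrow> real) \<Rightarrow> 'o \<Rightarrow> 's \<Rightarrow> 'v \<Rightarrow> bool" where
  "anchor_pair M i x y \<longleftrightarrow> M i x y > 0 \<and> (\<forall>x'. x' \<noteq> x \<longrightarrow> M i x' y = 0)"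

definition anchored :: "('s::finite \<Rightarrow> 's \<Rightarrow> real) \<Rightarrow> ('o \<Rightarrow> 's \<Rightarrow> 'v \<Rightarrow> real) \<Rightarrow> bool" where
  "anchored T M \<longleftrightarrow> ergodic_chain T \<and> (\<forall>i. \<exists>x y. anchor_pair M i x y)"

definition alpha :: "('s::finite \<Rightarrow> 's \<Rightarrow> real) \<Rightarrow> ('o \<Rightarrow> 's \<Rightarrow> 'v \<Rightarrow> real) \<Rightarrow> 'o \<Rightarrow> 'v
    \<Rightarrow> ('s \<Rightarrow> real) \<Rightarrow> real" where
  "alpha T M i y z = (\<Sum>j\<in>UNIV. \<Sum>x\<in>UNIV. z j * T j x * M i x y)"

definition rupd :: "('s::finite \<Rightarrow> 's \<Rightarrow> real) \<Rightarrow> ('o \<Rightarrow> 's \<Rightarrow> 'v \<Rightarrow> real) \<Rightarrow> 'o \<Rightarrow> 'v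
    \<Rightarrow> ('s \<Rightarrow> real) \<Rightarrow> ('s \<Rightarrow> real)" where
  "rupd T M i y z = (\<lambda>x. (\<Sum>j\<in>UNIV. M i x y * T j x * z j) / alpha T M i y z)"

inductive_set info_orbit :: "('s::finite \<Rightarrow> 's \<Rightarrow> real) \<Rightarrow> ('o \<Rightarrow> 's \<Rightarrow> 'v \<Rightarrow> real)
    \<Rightarrow> 's \<Rightarrow> ('s \<Rightarrow> real) set" for T M x where
  base: "delta x \<in> info_orbit T M x"
| step: "z \<in> info_orbit T M x \<Longrightarrow> alpha T M i y z > 0 \<Longrightarrow> rupd T M i y z \<in> info_orbit T M x"

definition info_R :: "('s::finite \<Rightarrow> 's \<Rightarrow> real) \<Rightarrow> ('o \<Rightarrow> 's \<Rightarrow> 'v \<Rightarrow> real) \<Rightarrow> ('s \<Rightarrow> real) set" where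
  "info_R T M = (\<Union>x. info_orbit T M x)"

text \<open>First-passage probabilities of the information chain under policy g:
  first_ret T M g a k w = P_w(the chain, started at w, is at a at step k and not at a at
  steps 1..k-1). From state w the chain moves to rupd (g w) y w with probability
  alpha (g w) y w (summing over observation values y).\<close>
fun first_ret :: "('s::finite \<Rightarrow> 's \<Rightarrow> real) \<Rightarrow> ('o \<Rightarrow> 's \<Rightarrow> 'v::finite \<Rightarrow> real)
    \<Rightarrow> (('s \<Rightarrow> real) \<Rightarrow> 'o) \<Rightarrow> ('s \<Rightarrow> real) \<Rightarrow> nat \<Rightarrow> ('s \<Rightarrow> real) \<Rightarrow> real" where
  "first_ret T M g a 0 w = 0"
| "first_ret T M g a (Suc 0) w =
     (\<Sum>y\<in>UNIV. if alpha T M (g w) y w > 0 \<and> rupd T M (g w) y w = a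
                 then alpha T M (g w) y w else 0)"
| "first_ret T M g a (Suc (Suc k)) w =
     (\<Sum>y\<in>UNIV. if alpha T M (g w) y w > 0 \<and> rupd T M (g w) y w \<noteq> a
                 then alpha T M (g w) y w * first_ret T M g a (Suc k) (rupd T M (g w) y w) else 0)"

text \<open>A state a of the restricted chain F|_R is positive recurrent iff the return time
  to a is a.s. finite and has finite expectation.\<close>
definition positive_recurrent :: "('s::finite \<Rightarrow> 's \<Rightarrow> real) \<Rightarrow> ('o \<Rightarrow> 's \<Rightarrow> 'v::finite \<Rightarrow> real)
    \<Rightarrow> (('s \<Rightarrow> real) \<Rightarrow> 'o) \<Rightarrow> ('s \<Rightarrow> real) \<Rightarrow> bool" where
  "positive_recurrent T M g a \<longleftrightarrow> a \<in> info_R T M \<and>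
     (\<lambda>k. first_ret T M g a k a) sums 1 \<and>
     summable (\<lambda>k. real k * first_ret T M g a k a)"

end

theory Submission
  imports Defs
begin

lemma summable_n_pow:
  fixes s :: real assumes "0 \<le> s" "s < 1"
  shows "summable (\<lambda>n. real n * s^n)"
proof -
  define t where "t = sqrt s"
  have t0: "0 \<le> t" and t1: "t < 1" using assms by (auto simp: t_def)
  have st: "s = t^2" using assms by (simp add: t_def)
  have "(\<lambda>n. of_nat n * t ^ n) \<longlonglongrightarrow> (0::real)"
    using powser_times_n_limit_0[of t] t0 t1 by simp
  then have "(\<lambda>n. norm (of_nat n * t ^ n)) \<longlonglongrightarrow> (0::real)"
    by (rule tendsto_norm_zero)
  from order_tendstoD(2)[OF this, of 1]
  have ev: "eventually (\<lambda>n. norm (of_nat n * t ^ n) < (1::real)) sequentially" by simp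
  have "eventually (\<lambda>n. norm (real n * s^n) \<le> t^n) sequentially"
    using ev
  proof eventually_elim
    case (elim n)
    have "real n * s^n = (real n * t^n) * t^n" by (simp add: st power_mult power2_eq_square power_mult_distrib)
    also have "\<bar>\<dots>\<bar> \<le> 1 * t^n" using elim t0
      mult_right_mono[of "real n * t^n" 1 "t^n"] by simp
    finally show ?case by simp
  qed
  note ev2 = this
  have sm: "summable (\<lambda>n. t^n)" using t0 t1 by simp
  show ?thesis by (rule summable_comparison_test_ev[OF ev2 sm])
qed


lemma mult_le_self_aux: "0 \<le> (p::real) \<Longrightarrow> q \<le> 1 \<Longrightarrow> p * q \<le> p"
  by (metis mult_left_mono mult_1_right)

locale hmmc =
  fixes T :: "'s::finite \<Rightarrow> 's \<Rightarrow> real"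
    and M :: "'o::finite \<Rightarrow> 's \<Rightarrow> 'v::finite \<Rightarrow> real"
    and g :: "('s \<Rightarrow> real) \<Rightarrow> 'o"
  assumes stT: "stochastic_matrix T"
    and stM: "\<And>i. stochastic_matrix (M i)"
    and posT: "positive_chain T"
    and anch: "\<And>i. \<exists>x y. anchor_pair M i x y"
begin

lemma T_nn: "T i j \<ge> 0" using stT by (simp add: stochastic_matrix_def)
lemma T_sum: "(\<Sum>j\<in>UNIV. T i j) = 1" using stT by (simp add: stochastic_matrix_def)
lemma M_nn: "M k i j \<ge> 0" using stM[of k] by (simp add: stochastic_matrix_def)
lemma M_sum: "(\<Sum>j\<in>UNIV. M k i j) = 1" using stM[of k] by (simp add: stochastic_matrix_def)

lemma alpha_nn: "z \<in> prob_simplex \<Longrightarrow> alpha T M i y z \<ge> 0"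
  unfolding alpha_def prob_simplex_def by (auto intro!: sum_nonneg simp: T_nn M_nn)

lemma alpha_sum:
  assumes "z \<in> prob_simplex" shows "(\<Sum>y\<in>UNIV. alpha T M i y z) = 1"
proof -
  have "(\<Sum>y\<in>UNIV. alpha T M i y z) = (\<Sum>j\<in>UNIV. \<Sum>y\<in>UNIV. \<Sum>x\<in>UNIV. z j * T j x * M i x y)"
    unfolding alpha_def by (rule sum.swap)
  also have "\<dots> = (\<Sum>j\<in>UNIV. \<Sum>x\<in>UNIV. \<Sum>y\<in>UNIV. z j * T j x * M i x y)"
    by (rule sum.cong[OF refl], rule sum.swap)
  also have "\<dots> = (\<Sum>j\<in>UNIV. \<Sum>x\<in>UNIV. z j * T j x * (\<Sum>y\<in>UNIV. M i x y))"
    by (simp add: sum_distrib_left)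
  also have "\<dots> = (\<Sum>j\<in>UNIV. z j * (\<Sum>x\<in>UNIV. T j x))"
    by (simp add: M_sum sum_distrib_left)
  also have "\<dots> = 1" using assms by (simp add: T_sum prob_simplex_def)
  finally show ?thesis .
qed

lemma rupd_simplex:
  assumes z: "z \<in> prob_simplex" and a: "alpha T M i y z > 0"
  shows "rupd T M i y z \<in> prob_simplex"
proof -
  have nn: "\<forall>x. rupd T M i y z x \<ge> 0"
    using z a unfolding rupd_def prob_simplex_def
    by (auto intro!: divide_nonneg_pos sum_nonneg simp: T_nn M_nn)
  have "(\<Sum>x\<in>UNIV. rupd T M i y z x) = (\<Sum>x\<in>UNIV. \<Sum>j\<in>UNIV. M i x y * T j x * z j) / alpha T M i y z"
    unfolding rupd_def by (simp add: sum_divide_distrib)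
  also have "(\<Sum>x\<in>UNIV. \<Sum>j\<in>UNIV. M i x y * T j x * z j) = alpha T M i y z"
    unfolding alpha_def by (subst sum.swap) (simp add: mult_ac)
  finally have "(\<Sum>x\<in>UNIV. rupd T M i y z x) = 1" using a by simp
  with nn show ?thesis by (simp add: prob_simplex_def)
qed

definition P where "P w y = alpha T M (g w) y w"
definition nx where "nx w y = rupd T M (g w) y w"

lemma P_nn: "w \<in> prob_simplex \<Longrightarrow> P w y \<ge> 0"
  by (simp add: P_def alpha_nn)
lemma P_sum: "w \<in> prob_simplex \<Longrightarrow> (\<Sum>y\<in>UNIV. P w y) = 1"
  by (simp add: P_def alpha_sum)
lemma nx_simplex: "w \<in> prob_simplex \<Longrightarrow> P w y > 0 \<Longrightarrow> nx w y \<in> prob_simplex"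
  by (simp add: P_def nx_def rupd_simplex)

primrec Av :: "('s \<Rightarrow> real) \<Rightarrow> nat \<Rightarrow> ('s \<Rightarrow> real) \<Rightarrow> real" where
  "Av a 0 w = 1"
| "Av a (Suc n) w = (\<Sum>y\<in>UNIV. if P w y > 0 \<and> nx w y \<noteq> a then P w y * Av a n (nx w y) else 0)"

lemma Av_bounds: "w \<in> prob_simplex \<Longrightarrow> 0 \<le> Av a n w \<and> Av a n w \<le> 1"
proof (induction n arbitrary: w)
  case 0 then show ?case by simp
next
  case (Suc n)
  have "0 \<le> Av a (Suc n) w"
    using Suc nx_simplex by (auto intro!: sum_nonneg)
  moreover have "Av a (Suc n) w \<le> (\<Sum>y\<in>UNIV. P w y)"
    unfolding Av.simps
  proof (rule sum_mono)
    fix y show "(if P w y > 0 \<and> nx w y \<noteq> a then P w y * Av a n (nx w y) else 0) \<le> P w y"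
      using Suc.IH[OF nx_simplex[OF Suc.prems]] P_nn[OF Suc.prems, of y]
      by (auto intro: mult_le_self_aux)
  qed
  ultimately show ?case using P_sum[OF Suc.prems] by simp
qed

lemma Av_mono1: "w \<in> prob_simplex \<Longrightarrow> Av a (Suc n) w \<le> Av a n w"
proof (induction n arbitrary: w)
  case 0 then show ?case using Av_bounds[of w a 1] by simp
next
  case (Suc n)
  show ?case
    unfolding Av.simps(2)[of a "Suc n" w] Av.simps(2)[of a n w]
  proof (rule sum_mono)
    fix y
    show "(if P w y > 0 \<and> nx w y \<noteq> a then P w y * Av a (Suc n) (nx w y) else 0)
       \<le> (if P w y > 0 \<and> nx w y \<noteq> a then P w y * Av a n (nx w y) else 0)"
    proof (cases "P w y > 0 \<and> nx w y \<noteq> a")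
      case True
      then have "Av a (Suc n) (nx w y) \<le> Av a n (nx w y)"
        using Suc.IH nx_simplex Suc.prems by blast
      then show ?thesis using True by (simp del: Av.simps add: mult_left_mono)
    next
      case False then show ?thesis by (simp only: if_not_P[OF False] if_False order_refl)
    qed
  qed
qed

lemma Av_mono: assumes "w \<in> prob_simplex" "m \<le> n" shows "Av a n w \<le> Av a m w"
  using assms(2)
proof (induction n rule: dec_induct)
  case base then show ?case by simp
next
  case (step k) then show ?case using Av_mono1[OF assms(1), of a k] by simp
qed

lemma first_ret_Av:
  "w \<in> prob_simplex \<Longrightarrow> first_ret T M g a (Suc k) w = Av a k w - Av a (Suc k) w"
proof (induction k arbitrary: w)
  case 0
  have fr: "first_ret T M g a (Suc 0) w = (\<Sum>y\<in>UNIV. if P w y > 0 \<and> nx w y = a then P w y else 0)"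
    unfolding P_def nx_def by simp
  have "(\<Sum>y\<in>UNIV. P w y) = (\<Sum>y\<in>UNIV. if P w y > 0 \<and> nx w y = a then P w y else 0)
      + (\<Sum>y\<in>UNIV. if P w y > 0 \<and> nx w y \<noteq> a then P w y * Av a 0 (nx w y) else 0)"
    unfolding sum.distrib[symmetric]
    by (rule sum.cong) (use P_nn[OF 0] in \<open>auto simp: less_le\<close>)
  then show ?case using fr P_sum[OF 0] by simp
next
  case (Suc k)
  have "first_ret T M g a (Suc (Suc k)) w =
     (\<Sum>y\<in>UNIV. if P w y > 0 \<and> nx w y \<noteq> a then P w y * first_ret T M g a (Suc k) (nx w y) else 0)"
    unfolding P_def nx_def by simp
  also have "\<dots> = (\<Sum>y\<in>UNIV. if P w y > 0 \<and> nx w y \<noteq> a then P w y * (Av a k (nx w y) - Av a (Suc k) (nx w y)) else 0)"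
    by (rule sum.cong) (auto simp: Suc.IH nx_simplex Suc.prems)
  also have "\<dots> = Av a (Suc k) w - Av a (Suc (Suc k)) w"
    unfolding Av.simps(2)[of a k w] Av.simps(2)[of a "Suc k" w] sum_subtractf[symmetric]
    by (rule sum.cong) (auto simp: algebra_simps)
  finally show ?case .
qed

definition closedS where
  "closedS S \<longleftrightarrow> S \<subseteq> prob_simplex \<and> (\<forall>w\<in>S. \<forall>y. P w y > 0 \<longrightarrow> nx w y \<in> S)"

lemma Av_mult:
  assumes cS: "closedS S" and bd: "\<And>w. w \<in> S \<Longrightarrow> Av a n w \<le> B" and B: "0 \<le> B"
  shows "w \<in> S \<Longrightarrow> Av a (m + n) w \<le> B * Av a m w"
proof (induction m arbitrary: w)
  case 0 then show ?case using bd by simp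
next
  case (Suc m)
  have wS: "w \<in> prob_simplex" using Suc.prems cS by (auto simp: closedS_def)
  have "Av a (Suc m + n) w = (\<Sum>y\<in>UNIV. if P w y > 0 \<and> nx w y \<noteq> a then P w y * Av a (m + n) (nx w y) else 0)"
    by simp
  also have "\<dots> \<le> (\<Sum>y\<in>UNIV. if P w y > 0 \<and> nx w y \<noteq> a then P w y * (B * Av a m (nx w y)) else 0)"
  proof (rule sum_mono)
    fix y
    show "(if P w y > 0 \<and> nx w y \<noteq> a then P w y * Av a (m + n) (nx w y) else 0)
        \<le> (if P w y > 0 \<and> nx w y \<noteq> a then P w y * (B * Av a m (nx w y)) else 0)"
      using Suc.IH[of "nx w y"] Suc.prems cS by (auto simp: closedS_def intro!: mult_left_mono)
  qed
  also have "\<dots> = B * Av a (Suc m) w"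
    unfolding Av.simps sum_distrib_left by (rule sum.cong) auto
  finally show ?case .
qed

lemma Av_geom:
  assumes cS: "closedS S" and bd: "\<And>w. w \<in> S \<Longrightarrow> Av a N w \<le> B" and B: "0 \<le> B"
  shows "w \<in> S \<Longrightarrow> Av a (N * j) w \<le> B ^ j"
proof (induction j arbitrary: w)
  case 0 then show ?case by simp
next
  case (Suc j)
  have "Av a (N * Suc j) w = Av a (N * j + N) w" by (simp add: add.commute)
  also have "\<dots> \<le> B * Av a (N * j) w" by (rule Av_mult[OF cS bd B Suc.prems])
  also have "\<dots> \<le> B * B ^ j" by (rule mult_left_mono[OF Suc.IH[OF Suc.prems] B])
  finally show ?case by simp
qed

inductive reachs :: "('s \<Rightarrow> real) \<Rightarrow> ('s \<Rightarrow> real) \<Rightarrow> bool" where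
  r1: "P w y > 0 \<Longrightarrow> reachs w (nx w y)"
| r2: "P w y > 0 \<Longrightarrow> reachs (nx w y) v \<Longrightarrow> reachs w v"

lemma reachs_trans: "reachs w v \<Longrightarrow> reachs v u \<Longrightarrow> reachs w u"
  by (induction rule: reachs.induct) (auto intro: reachs.intros)

lemma reachs_simplex: "reachs w v \<Longrightarrow> w \<in> prob_simplex \<Longrightarrow> v \<in> prob_simplex"
  by (induction rule: reachs.induct) (auto intro: nx_simplex)

lemma Av_step_bound:
  assumes w: "w \<in> prob_simplex" and p: "P w y > 0"
  shows "Av b (Suc n) w \<le> 1 - P w y * (if nx w y = b then 1 else 1 - Av b n (nx w y))"
proof -
  define f where "f y' = (if P w y' > 0 \<and> nx w y' \<noteq> b then P w y' * Av b n (nx w y') else 0)" for y'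
  have fle: "f y' \<le> P w y'" for y'
    using Av_bounds[OF nx_simplex[OF w], of y' b n] P_nn[OF w, of y']
    by (auto simp: f_def intro: mult_le_self_aux)
  have fy: "f y \<le> P w y - P w y * (if nx w y = b then 1 else 1 - Av b n (nx w y))"
    using p by (simp add: f_def algebra_simps)
  have "Av b (Suc n) w = f y + (\<Sum>y'\<in>UNIV - {y}. f y')"
    unfolding Av.simps f_def[symmetric] by (simp add: sum.remove)
  also have "\<dots> \<le> (P w y - P w y * (if nx w y = b then 1 else 1 - Av b n (nx w y))) + (\<Sum>y'\<in>UNIV - {y}. P w y')"
    by (rule add_mono[OF fy sum_mono[OF fle]])
  also have "(\<Sum>y'\<in>UNIV - {y}. P w y') = 1 - P w y"
    using P_sum[OF w] sum.remove[of UNIV y "P w"] by simp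
  finally show ?thesis by simp
qed

lemma reachs_Av: "reachs c b \<Longrightarrow> c \<in> prob_simplex \<Longrightarrow> \<exists>n. Av b n c < 1"
proof (induction rule: reachs.induct)
  case (r1 w y)
  have "Av (nx w y) (Suc 0) w \<le> 1 - P w y" using Av_step_bound[OF r1.prems r1.hyps, of "nx w y" 0] by simp
  then show ?case using r1.hyps by (intro exI[of _ "Suc 0"]) simp
next
  case (r2 w y v)
  obtain n where n: "Av v n (nx w y) < 1" using r2.IH nx_simplex[OF r2.prems r2.hyps(1)] by blast
  have "0 < P w y * (if nx w y = v then 1 else 1 - Av v n (nx w y))"
    using r2.hyps(1) n by auto
  then show ?case using Av_step_bound[OF r2.prems r2.hyps(1), of v n] by (intro exI[of _ "Suc n"]) simp
qed

end

context hmmc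
begin

definition xa where "xa i = fst (SOME p. anchor_pair M i (fst p) (snd p))"
definition ya where "ya i = snd (SOME p. anchor_pair M i (fst p) (snd p))"

lemma anc: "anchor_pair M i (xa i) (ya i)"
proof -
  obtain x y where "anchor_pair M i x y" using anch by blast
  then have "anchor_pair M i (fst (x, y)) (snd (x, y))" by simp
  then show ?thesis unfolding xa_def ya_def by (rule someI)
qed

lemma alpha_anchor:
  "alpha T M i (ya i) z = (\<Sum>j\<in>UNIV. z j * T j (xa i)) * M i (xa i) (ya i)"
proof -
  have z0: "M i x (ya i) = 0" if "x \<noteq> xa i" for x using anc[of i] that by (simp add: anchor_pair_def)
  have "(\<Sum>x\<in>UNIV. z j * T j x * M i x (ya i)) = z j * T j (xa i) * M i (xa i) (ya i)" for j
    by (subst sum.remove[of UNIV "xa i"]) (auto simp: z0)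
  then show ?thesis unfolding alpha_def by (simp add: sum_distrib_right)
qed

definition c0 where "c0 = Min {T j (xa i) * M i (xa i) (ya i) | j i. True}"

lemma c0_pos: "c0 > 0"
proof -
  have fin: "finite {T j (xa i) * M i (xa i) (ya i) | j i. True}"
  proof -
    have "{T j (xa i) * M i (xa i) (ya i) | j i. True} = (\<lambda>(j,i). T j (xa i) * M i (xa i) (ya i)) ` UNIV"
      by auto
    then show ?thesis by simp
  qed
  have "\<forall>a\<in>{T j (xa i) * M i (xa i) (ya i) | j i. True}. 0 < a"
    using posT anc by (auto simp: positive_chain_def anchor_pair_def)
  then show ?thesis unfolding c0_def using fin by (subst Min_gr_iff) auto
qed

lemma c0_le: "c0 \<le> T j (xa i) * M i (xa i) (ya i)"
proof -
  have "{T j (xa i) * M i (xa i) (ya i) | j i. True} = (\<lambda>(j,i). T j (xa i) * M i (xa i) (ya i)) ` UNIV"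
    by auto
  then have fin: "finite {T j (xa i) * M i (xa i) (ya i) | j i. True}" by simp
  show ?thesis unfolding c0_def by (rule Min_le[OF fin]) blast
qed

lemma P_anchor: assumes w: "w \<in> prob_simplex" shows "P w (ya (g w)) \<ge> c0"
proof -
  let ?i = "g w"
  have "P w (ya ?i) = (\<Sum>j\<in>UNIV. w j * (T j (xa ?i) * M ?i (xa ?i) (ya ?i)))"
    unfolding P_def alpha_anchor by (simp add: sum_distrib_left sum_distrib_right mult_ac)
  also have "\<dots> \<ge> (\<Sum>j\<in>UNIV. w j * c0)"
    using w c0_le by (auto simp: prob_simplex_def intro!: sum_mono mult_left_mono)
  also have "(\<Sum>j\<in>UNIV. w j * c0) = c0" using w by (simp add: prob_simplex_def sum_distrib_right[symmetric])
  finally show ?thesis .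
qed

lemma P_anchor_pos: "w \<in> prob_simplex \<Longrightarrow> P w (ya (g w)) > 0"
  using P_anchor c0_pos by (meson less_le_trans)

lemma nx_anchor: assumes w: "w \<in> prob_simplex" shows "nx w (ya (g w)) = delta (xa (g w))"
proof
  fix x
  let ?i = "g w"
  have ap: "alpha T M ?i (ya ?i) w > 0" using P_anchor_pos[OF w] by (simp add: P_def)
  show "nx w (ya (g w)) x = delta (xa (g w)) x"
  proof (cases "x = xa ?i")
    case True
    have "(\<Sum>j\<in>UNIV. M ?i x (ya ?i) * T j x * w j) = alpha T M ?i (ya ?i) w"
      unfolding alpha_anchor True by (simp add: sum_distrib_left sum_distrib_right mult_ac)
    then show ?thesis using ap True by (simp add: nx_def rupd_def delta_def)
  next
    case False
    then have "M ?i x (ya ?i) = 0" using anc[of ?i] by (simp add: anchor_pair_def)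
    then show ?thesis using False by (simp add: nx_def rupd_def delta_def)
  qed
qed

lemma delta_simplex: "delta x \<in> prob_simplex"
  by (simp add: prob_simplex_def delta_def)

end

context hmmc
begin

lemma pr_of_bound:
  assumes b: "b \<in> prob_simplex" and bi: "b \<in> info_R T M"
    and s0: "0 \<le> s" and s1: "s < 1" and B: "0 < B"
    and bd: "\<And>k. Av b k b \<le> s ^ k / B"
  shows "positive_recurrent T M g b"
proof -
  define U where "U k = Av b k b" for k
  define fr where "fr k = first_ret T M g b k b" for k
  have U0: "\<And>k. 0 \<le> U k" using Av_bounds[OF b] by (simp add: U_def)
  have frU: "fr (Suc k) = U k - U (Suc k)" for k using first_ret_Av[OF b] by (simp add: fr_def U_def)
  have fr_nn: "0 \<le> fr (Suc k)" for k using Av_mono1[OF b, of b k] by (simp add: frU U_def)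
  have fr_le: "fr (Suc k) \<le> s ^ k / B" for k using frU U0[of "Suc k"] bd[of k] by (simp add: U_def)
  have Ulim: "U \<longlonglongrightarrow> 0"
  proof (rule tendsto_sandwich[of "\<lambda>_. 0" _ _ "\<lambda>k. s ^ k / B"])
    show "\<forall>\<^sub>F n in sequentially. 0 \<le> U n" using U0 by simp
    show "\<forall>\<^sub>F n in sequentially. U n \<le> s ^ n / B" using bd by (simp add: U_def)
    show "(\<lambda>_. 0::real) \<longlonglongrightarrow> 0" by simp
    have "(\<lambda>k. s ^ k) \<longlonglongrightarrow> 0" using s0 s1 by (intro LIMSEQ_power_zero) simp
    then show "(\<lambda>k. s ^ k / B) \<longlonglongrightarrow> 0" using tendsto_divide_zero by blast
  qed
  have "(\<lambda>k. fr (Suc k)) sums 1"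
    unfolding sums_def
  proof -
    have "(\<lambda>n. \<Sum>k<n. fr (Suc k)) = (\<lambda>n. 1 - U n)"
      by (rule ext, simp only: frU sum_lessThan_telescope'[of U]) (simp add: U_def)
    moreover have "(\<lambda>n. 1 - U n) \<longlonglongrightarrow> 1 - 0" by (intro tendsto_diff tendsto_const Ulim)
    ultimately show "(\<lambda>n. \<Sum>k<n. fr (Suc k)) \<longlonglongrightarrow> 1" by simp
  qed
  then have sums: "fr sums 1" using sums_Suc_iff[of fr 1] by (simp add: fr_def)
  have "summable (\<lambda>k. real (Suc k) * fr (Suc k))"
  proof (rule summable_comparison_test')
    show "summable (\<lambda>k. (real k * s ^ k + s ^ k) / B)"
      by (intro summable_divide summable_add summable_n_pow s0 s1 summable_geometric) (use s0 s1 in simp)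
    fix k :: nat
    have "norm (real (Suc k) * fr (Suc k)) = real (Suc k) * fr (Suc k)" using fr_nn[of k] by simp
    also have "\<dots> \<le> real (Suc k) * (s ^ k / B)" by (rule mult_left_mono[OF fr_le]) simp
    also have "\<dots> = (real k * s ^ k + s ^ k) / B" by (simp add: algebra_simps)
    finally show "norm (real (Suc k) * fr (Suc k)) \<le> (real k * s ^ k + s ^ k) / B" .
  qed
  then have "summable (\<lambda>k. real k * fr k)"
    using summable_Suc_iff[of "\<lambda>k. real k * fr k"] by simp
  moreover have "fr = (\<lambda>k. first_ret T M g b k b)" by (simp add: fr_def fun_eq_iff)
  ultimately show ?thesis using sums bi by (simp add: positive_recurrent_def)
qed

end

context hmmc
begin

lemma main: "\<exists>i. positive_recurrent T M g (delta (xa i))"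
proof -
  define D where "D = range (\<lambda>i. delta (xa i))"
  have finD: "finite D" by (simp add: D_def)
  have Dsim: "D \<subseteq> prob_simplex" by (auto simp: D_def delta_simplex)
  define Rch where "Rch a = {d \<in> D. reachs a d}" for a
  have finR: "finite (Rch a)" for a using finD by (simp add: Rch_def)
  have inR: "delta (xa (g a)) \<in> Rch a" if "a \<in> prob_simplex" for a
    using reachs.r1[OF P_anchor_pos[OF that]] nx_anchor[OF that] by (simp add: Rch_def D_def)
  define i0 :: 'o where "i0 = undefined"
  have "delta (xa i0) \<in> D" by (simp add: D_def)
  then obtain a0 where a0D: "a0 \<in> D" and a0min: "\<And>a. a \<in> D \<Longrightarrow> card (Rch a0) \<le> card (Rch a)"
    using ex_has_least_nat[of "\<lambda>a. a \<in> D" "delta (xa i0)" "\<lambda>a. card (Rch a)"] by blast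
  obtain b where bR: "b \<in> Rch a0" using inR[OF subsetD[OF Dsim a0D]] by blast
  have bD: "b \<in> D" using bR by (simp add: Rch_def)
  have bsim: "b \<in> prob_simplex" using bD Dsim by blast
  have backR: "reachs c b" if cR: "c \<in> Rch b" for c
  proof -
    have cD: "c \<in> D" using cR by (simp add: Rch_def)
    have "reachs a0 b" "reachs b c" using bR cR by (simp_all add: Rch_def)
    then have a0c: "reachs a0 c" by (rule reachs_trans)
    have sub: "Rch c \<subseteq> Rch a0" by (auto simp: Rch_def intro: reachs_trans[OF a0c])
    have c1: "card (Rch a0) \<le> card (Rch c)" by (rule a0min[OF cD])
    have c2: "card (Rch c) \<le> card (Rch a0)" by (rule card_mono[OF finR sub])
    have "Rch c = Rch a0" by (rule card_subset_eq[OF finR sub]) (use c1 c2 in linarith)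
    then have "b \<in> Rch c" using bR by simp
    then show ?thesis by (simp add: Rch_def)
  qed
  define S where "S = insert b {v. reachs b v}"
  have S1: "S \<subseteq> prob_simplex"
  proof
    fix v assume "v \<in> S"
    then have "v = b \<or> reachs b v" by (simp add: S_def)
    then show "v \<in> prob_simplex" using bsim reachs_simplex[OF _ bsim] by blast
  qed
  have S2: "nx w y \<in> S" if "w \<in> S" "P w y > 0" for w y
  proof -
    have r: "reachs w (nx w y)" using that(2) by (rule reachs.r1)
    show ?thesis
    proof (cases "w = b")
      case True then show ?thesis using r by (simp add: S_def)
    next
      case False then have "reachs b w" using that(1) by (simp add: S_def)
      then show ?thesis using reachs_trans[OF _ r] by (simp add: S_def)
    qed
  qed
  have cS: "closedS S" unfolding closedS_def using S1 S2 by blast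
  have RbS: "delta (xa (g w)) \<in> Rch b" if "w \<in> S" for w
  proof -
    have ws: "w \<in> prob_simplex" using that cS by (auto simp: closedS_def)
    have dR: "delta (xa (g w)) \<in> Rch w" by (rule inR[OF ws])
    show ?thesis
    proof (cases "w = b")
      case True then show ?thesis using dR by simp
    next
      case False then have "reachs b w" using that by (simp add: S_def)
      then show ?thesis using dR reachs_trans[OF \<open>reachs b w\<close>] by (simp add: Rch_def)
    qed
  qed
  have Rne: "Rch b \<noteq> {}" using inR[OF bsim] by blast
  have RDsim: "c \<in> Rch b \<Longrightarrow> c \<in> prob_simplex" for c using Dsim by (auto simp: Rch_def)
  have "\<forall>c\<in>Rch b. \<exists>n. Av b n c < 1"
  proof
    fix c assume c: "c \<in> Rch b"
    show "\<exists>n. Av b n c < 1" by (rule reachs_Av[OF backR[OF c] RDsim[OF c]])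
  qed
  from bchoice[OF this] obtain nf where nf0: "\<forall>c\<in>Rch b. Av b (nf c) c < 1" by blast
  then have nf: "\<And>c. c \<in> Rch b \<Longrightarrow> Av b (nf c) c < 1" by blast
  define N0 where "N0 = Max (nf ` Rch b)"
  define \<delta> where "\<delta> = Min ((\<lambda>c. 1 - Av b N0 c) ` Rch b)"
  have AvN0: "Av b N0 c < 1" if "c \<in> Rch b" for c
  proof -
    have "nf c \<le> N0" unfolding N0_def using finR that by auto
    then have "Av b N0 c \<le> Av b (nf c) c" by (rule Av_mono[OF RDsim[OF that]])
    then show ?thesis using nf[OF that] by simp
  qed
  have dpos: "0 < \<delta>" unfolding \<delta>_def using finR Rne AvN0 by (subst Min_gr_iff) auto
  have dle: "\<delta> \<le> 1 - Av b N0 c" if "c \<in> Rch b" for c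
    unfolding \<delta>_def using finR that by (intro Min_le) auto
  have d1: "\<delta> \<le> 1" using dle[of "delta (xa (g b))"] inR[OF bsim] Av_bounds[OF RDsim[OF inR[OF bsim]], of b N0]
    by linarith
  define \<epsilon> where "\<epsilon> = min (c0 * \<delta>) (1/2)"
  define B where "B = 1 - \<epsilon>"
  define N where "N = Suc N0"
  have eps: "0 < \<epsilon>" "\<epsilon> \<le> 1/2" using c0_pos dpos by (auto simp: \<epsilon>_def)
  have Bb: "1/2 \<le> B" "B < 1" using eps by (auto simp: B_def)
  have bdN: "Av b N w \<le> B" if wS: "w \<in> S" for w
  proof -
    have ws: "w \<in> prob_simplex" using wS cS by (auto simp: closedS_def)
    let ?y = "ya (g w)" and ?c = "delta (xa (g w))"
    have cR: "?c \<in> Rch b" by (rule RbS[OF wS])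
    define fac where "fac = (if nx w ?y = b then 1 else 1 - Av b N0 (nx w ?y))"
    have fac: "\<delta> \<le> fac" using dle[OF cR] d1 nx_anchor[OF ws] by (simp add: fac_def)
    have "Av b N w \<le> 1 - P w ?y * fac"
      unfolding N_def fac_def by (rule Av_step_bound[OF ws P_anchor_pos[OF ws]])
    moreover have "c0 * \<delta> \<le> P w ?y * fac"
      by (rule mult_mono[OF P_anchor[OF ws] fac]) (use dpos P_nn[OF ws] in auto)
    ultimately show ?thesis unfolding B_def \<epsilon>_def by linarith
  qed
  have Npos: "0 < N" by (simp add: N_def)
  have geo: "Av b k w \<le> B ^ (k div N)" if "w \<in> S" for k w
  proof -
    have ws: "w \<in> prob_simplex" using that cS by (auto simp: closedS_def)
    have "Av b k w \<le> Av b (N * (k div N)) w"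
      by (rule Av_mono[OF ws]) simp
    also have "\<dots> \<le> B ^ (k div N)"
      by (rule Av_geom[OF cS bdN _ that]) (use Bb in auto)
    finally show ?thesis .
  qed
  define s where "s = root N B"
  have s0: "0 \<le> s" and s1: "s < 1" using Bb Npos by (auto simp: s_def)
  have sN: "s ^ N = B" using Bb Npos by (simp add: s_def)
  have Bpos: "0 < B" using Bb by simp
  have Bk: "B ^ (k div N) \<le> s ^ k / B" for k
  proof -
    have "k = N * (k div N) + k mod N" by simp
    then have "s ^ k = (s ^ N) ^ (k div N) * s ^ (k mod N)"
      by (metis power_add power_mult)
    also have "\<dots> = B ^ (k div N) * s ^ (k mod N)" by (simp add: sN)
    finally have sk: "s ^ k = B ^ (k div N) * s ^ (k mod N)" .
    have "B \<le> s ^ (k mod N)" unfolding sN[symmetric]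
      by (rule power_decreasing) (use s0 s1 Npos in auto)
    then have "B ^ (k div N) * B \<le> s ^ k" unfolding sk
      by (rule mult_left_mono) (use Bpos in simp)
    then show ?thesis using Bpos by (simp add: pos_le_divide_eq)
  qed
  have bS: "b \<in> S" by (simp add: S_def)
  have "positive_recurrent T M g b"
  proof (rule pr_of_bound[OF bsim _ s0 s1 Bpos])
    show "b \<in> info_R T M" using bD by (auto simp: D_def info_R_def intro: info_orbit.base)
    fix k show "Av b k b \<le> s ^ k / B" using geo[OF bS, of k] Bk[of k] by linarith
  qed
  then show ?thesis using bD by (auto simp: D_def)
qed

end

theorem proposition2p22:
  fixes T :: "'s::finite \<Rightarrow> 's \<Rightarrow> real"
    and M :: "'o::finite \<Rightarrow> 's \<Rightarrow> 'v::finite \<Rightarrow> real"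
    and g :: "('s \<Rightarrow> real) \<Rightarrow> 'o"
  assumes "stochastic_matrix T"
    and "\<And>i. stochastic_matrix (M i)"
    and "positive_chain T"
    and "anchored T M"
    and "\<And>i. {z \<in> prob_simplex. g z = i} \<in> sets borel"
  shows "\<exists>i x y. anchor_pair M i x y \<and> positive_recurrent T M g (delta x)"
proof -
  interpret hmmc T M g
    using assms(1-4) by unfold_locales (auto simp: anchored_def)
  obtain i where "positive_recurrent T M g (delta (xa i))" using main by blast
  then show ?thesis using anc by blast
qed

end
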